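(* Let $n,l_1,u_1,l_2,u_2$ be non-negative integers and $(f(k))$, $(g(k))$ complex sequences such that $\sum_{k=l_1}^{u_1}f(k)t^k(1-t)^{n-k}=\sum_{k=l_2}^{u_2}g(k)t^k$ for all complex $t$. Let $s\in\mathbb{C}\setminus\mathbb{Z}^{-}$, $s\neq0$. Then \[ \sum_{k=l_1}^{u_1}\frac{f(k)}{(k+s)\binom{n+s}{k+s}}=\sum_{k=l_2}^{u_2}\frac{g(k)}{k+s},\qquad \sum_{k=l_1}^{u_1}\frac{f(k)}{(k+1)\binom{n+1}{k+1}}=\sum_{k=l_2}^{u_2}\frac{g(k)}{k+1}, \] \[ \sum_{k=l_1}^{u_1}f(k)\frac{H_{n-k}-H_{n+s}}{(k+s)\binom{n+s}{k+s}}=-\sum_{k=l_2}^{u_2}g(k)\frac{H_{k+s}}{k+s},\qquad \sum_{k=l_1}^{u_1}f(k)\frac{H_{n-k}-H_{n+1}}{(k+1)\binom{n+1}{k+1}}=-\sum_{k=l_2}^{u_2}g(k)\frac{H_{k+1}}{k+1}. \]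
   Context: $\mathbb{Z}^{-}$ denotes the set of negative integers. For complex $z$ not a negative integer, $H_z=\psi(z+1)+\gamma$; for integers $m\ge0$, $H_m=\sum_{j=1}^m1/j$. Binomial coefficients with complex entries: $\binom{x}{y}=\frac{\Gamma(x+1)}{\Gamma(y+1)\Gamma(x-y+1)}$. *)

theory Defs
  imports "HOL-Analysis.Analysis"
begin

text \<open>Harmonic numbers of a complex argument: H z = psi(z+1) + gamma.\<close>
definition Hc :: "complex \<Rightarrow> complex" where
  "Hc z = Digamma (z + 1) + of_real euler_mascheroni"

definition cbinom :: "complex \<Rightarrow> complex \<Rightarrow> complex" where
  "cbinom x y = Gamma (x + 1) / (Gamma (y + 1) * Gamma (x - y + 1))"

end

theory Submission imports Defs begin


lemma nonpos_shift: "(s::complex) \<notin> \<int>\<^sub>\<le>\<^sub>0 \<Longrightarrow> s + of_nat k \<notin> \<int>\<^sub>\<le>\<^sub>0"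
proof
  assume "s \<notin> \<int>\<^sub>\<le>\<^sub>0" "s + of_nat k \<in> \<int>\<^sub>\<le>\<^sub>0"
  then have "s + of_nat k - of_nat k \<in> \<int>\<^sub>\<le>\<^sub>0" by (intro nonpos_Ints_diff_Nats) auto
  then show False using \<open>s \<notin> _\<close> by simp
qed

definition Sd :: "(complex \<Rightarrow> complex) \<Rightarrow> nat \<Rightarrow> complex \<Rightarrow> complex" where
  "Sd F m x = (\<Sum>j\<le>m. of_nat (m choose j) * (-1)^j * F (x + of_nat j))"

lemma Sd_Suc: "Sd F (Suc m) x = Sd F m x - Sd F m (x+1)"
proof -
  define e where "e j = (-1::complex)^j * F (x + of_nat j)" for j
  have A1: "Sd F (Suc m) x = e 0 + (\<Sum>j\<le>m. of_nat (m choose j) * e (Suc j)) + (\<Sum>j\<le>m. of_nat (m choose Suc j) * e (Suc j))"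
    unfolding Sd_def e_def sum.atMost_Suc_shift[of _ m] sum.atMost_Suc_shift[of _ "Suc m"]
    by (simp add: sum.distrib[symmetric] algebra_simps del: sum.atMost_Suc)
  have "e 0 + (\<Sum>j\<le>m. of_nat (m choose Suc j) * e (Suc j)) = (\<Sum>j\<le>Suc m. of_nat (m choose j) * e j)"
    by (simp add: sum.atMost_Suc_shift del: sum.atMost_Suc)
  also have "\<dots> = (\<Sum>j\<le>m. of_nat (m choose j) * e j)" by simp
  also have "\<dots> = Sd F m x" by (simp add: Sd_def e_def mult.assoc)
  finally have A2: "e 0 + (\<Sum>j\<le>m. of_nat (m choose Suc j) * e (Suc j)) = Sd F m x" .
  have A3: "(\<Sum>j\<le>m. of_nat (m choose j) * e (Suc j)) = - Sd F m (x+1)"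
    by (simp add: Sd_def e_def sum_negf[symmetric] add_ac mult.assoc)
  show ?thesis using A1 A2 A3 by (simp add: algebra_simps)
qed

definition Pm :: "nat \<Rightarrow> complex \<Rightarrow> complex" where
  "Pm m x = fact m / pochhammer x (Suc m)"

lemma poch_nz: "x \<notin> \<int>\<^sub>\<le>\<^sub>0 \<Longrightarrow> pochhammer (x::complex) m \<noteq> 0"
  by (auto simp: pochhammer_eq_0_iff)

lemma Pm_Suc: assumes "x \<notin> \<int>\<^sub>\<le>\<^sub>0" shows "Pm (Suc m) x = Pm m x - Pm m (x+1)"
proof -
  define Q where "Q = pochhammer (x+1) m"
  have x1: "x + 1 \<notin> \<int>\<^sub>\<le>\<^sub>0" using nonpos_shift[OF assms, of 1] by simp
  have Q: "Q \<noteq> 0" unfolding Q_def using poch_nz[OF x1] .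
  have x0: "x \<noteq> 0" using assms by auto
  have xm: "x + of_nat m + 1 \<noteq> 0" using nonpos_shift[OF assms, of "Suc m"] by (auto simp: add_ac)
  have e1: "pochhammer x (Suc m) = x * Q" by (simp add: Q_def pochhammer_rec)
  have e2: "pochhammer (x+1) (Suc m) = Q * (x + of_nat m + 1)" by (simp add: Q_def pochhammer_Suc add_ac)
  have e3: "pochhammer x (Suc (Suc m)) = x * Q * (x + of_nat m + 1)"
    by (simp add: pochhammer_rec[of x "Suc m"] e2)
  have "fact m / (x * Q) - fact m / (Q * (x + of_nat m + 1)) = fact m * (of_nat m + 1) / (x * Q * (x + of_nat m + 1))"
    using Q x0 xm by (simp add: divide_simps) (simp add: algebra_simps)
  then show ?thesis unfolding Pm_def e1 e2 e3 by (simp add: add_ac)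
qed

lemma Sd_inv: "x \<notin> \<int>\<^sub>\<le>\<^sub>0 \<Longrightarrow> Sd (\<lambda>y. 1 / y) m x = Pm m x"
proof (induction m arbitrary: x)
  case 0
  then show ?case by (auto simp: Sd_def Pm_def)
next
  case (Suc m)
  have x1: "x + 1 \<notin> \<int>\<^sub>\<le>\<^sub>0" using nonpos_shift[OF Suc.prems, of 1] by simp
  show ?case using Suc.IH[OF Suc.prems] Suc.IH[OF x1] by (simp add: Sd_Suc Pm_Suc[OF Suc.prems])
qed

lemma Hc_Suc: "y + 1 \<noteq> 0 \<Longrightarrow> Hc (y + 1) = Hc y + 1 / (y + 1)"
  unfolding Hc_def using Digamma_plus1[of "y+1"] by (simp add: add_ac)

lemma Sd_H: "x \<notin> \<int>\<^sub>\<le>\<^sub>0 \<Longrightarrow> Sd (\<lambda>y. Hc y / y) m x = Pm m x * (Hc (x + of_nat m) - of_real (harm m))"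
proof (induction m arbitrary: x)
  case 0
  then show ?case by (auto simp: Sd_def Pm_def harm_def)
next
  case (Suc m)
  have x1: "x + 1 \<notin> \<int>\<^sub>\<le>\<^sub>0" using nonpos_shift[OF Suc.prems, of 1] by simp
  define Q where "Q = pochhammer (x+1) m"
  have Q: "Q \<noteq> 0" unfolding Q_def using poch_nz[OF x1] .
  have x0: "x \<noteq> 0" using Suc.prems by auto
  have xm: "x + of_nat m + 1 \<noteq> 0" using nonpos_shift[OF Suc.prems, of "Suc m"] by (auto simp: add_ac)
  have e1: "pochhammer x (Suc m) = x * Q" by (simp add: Q_def pochhammer_rec)
  have e2: "pochhammer (x+1) (Suc m) = Q * (x + of_nat m + 1)" by (simp add: Q_def pochhammer_Suc add_ac)
  have e3: "pochhammer x (Suc (Suc m)) = x * Q * (x + of_nat m + 1)"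
    by (simp add: pochhammer_rec[of x "Suc m"] e2)
  have H1: "Hc (x + of_nat (Suc m)) = Hc (x + of_nat m) + 1 / (x + of_nat m + 1)"
    using Hc_Suc[OF xm] by (simp add: add_ac)
  have H2: "Hc (x + 1 + of_nat m) = Hc (x + of_nat m) + 1 / (x + of_nat m + 1)"
    using H1 by (simp add: add_ac)
  have h: "complex_of_real (harm (Suc m)) = of_real (harm m) + 1 / (of_nat m + 1)"
  proof -
    have "(1::complex) + of_nat m \<noteq> 0" by (metis of_nat_Suc of_nat_neq_0 add.commute)
    then show ?thesis by (simp add: harm_Suc field_simps)
  qed
  define c where "c = fact m / (x * Q * (x + of_nat m + 1))"
  have a: "Pm m x = c * (x + of_nat m + 1)" unfolding Pm_def e1 c_def using xm by simp
  have b: "Pm m (x+1) = c * x" unfolding Pm_def e2 c_def using x0 by simp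
  have p: "Pm (Suc m) x = c * (of_nat m + 1)" unfolding Pm_def e3 c_def by (simp add: add_ac)
  define r where "r = 1 / (x + of_nat m + 1)"
  have r: "r * (x + of_nat m + 1) = 1" using xm unfolding r_def by simp
  have H2': "Hc (x + 1 + of_nat m) = Hc (x + of_nat m) + r" using H2 unfolding r_def .
  have H1': "Hc (x + of_nat (Suc m)) = Hc (x + of_nat m) + r" using H1 unfolding r_def .
  have h': "complex_of_real (harm (Suc m)) = of_real (harm m) + 1 / (of_nat m + 1)" using h .
  have m1: "(of_nat m + 1::complex) \<noteq> 0" using of_nat_neq_0[of m, where 'a=complex] by (simp add: add.commute)
  have "Sd (\<lambda>y. Hc y / y) (Suc m) x = c * (x + of_nat m + 1) * (Hc (x + of_nat m) - of_real (harm m))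
      - c * x * (Hc (x + of_nat m) + r - of_real (harm m))"
    using Suc.IH[OF Suc.prems] Suc.IH[OF x1] by (simp add: Sd_Suc a b H2')
  also have "\<dots> = c * (of_nat m + 1) * (Hc (x + of_nat m) + r - of_real (harm m) - 1 / (of_nat m + 1))"
  proof -
    have "c * (of_nat m + 1) * (1 / (of_nat m + 1)) = c * (r * (x + of_nat m + 1))" using m1 r by simp
    then show ?thesis by (simp add: algebra_simps)
  qed
  also have "\<dots> = Pm (Suc m) x * (Hc (x + of_nat (Suc m)) - of_real (harm (Suc m)))"
    unfolding p H1' h' by (simp add: algebra_simps)
  finally show ?case .
qed



lemma fzero:
  fixes f g :: "nat \<Rightarrow> complex"
  assumes poly_id: "\<forall>t::complex.
      (\<Sum>k=l1..u1. f k * t ^ k * (1 - t) powi (int n - int k)) = (\<Sum>k=l2..u2. g k * t ^ k)"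
  shows "\<forall>k\<in>{l1..u1}. n < k \<longrightarrow> f k = 0"
proof (rule ccontr)
  assume neg: "\<not> (\<forall>k\<in>{l1..u1}. n < k \<longrightarrow> f k = 0)"
  define S where "S = {k\<in>{l1..u1}. f k \<noteq> 0}"
  define K where "K = Max S"
  have fin: "finite S" unfolding S_def by auto
  obtain k0 where k0: "k0 \<in> S" "n < k0" using neg unfolding S_def by auto
  have KS: "K \<in> S" unfolding K_def using fin k0 by (intro Max_in) auto
  have nK: "n < K" using Max_ge[OF fin k0(1)] k0(2) unfolding K_def by simp
  have big: "f k = 0" if "k \<in> {l1..u1}" "K < k" for k
  proof (rule ccontr)
    assume "f k \<noteq> 0"
    then have "k \<in> S" using that unfolding S_def by auto
    then show False using Max_ge[OF fin, of k] that unfolding K_def by simp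
  qed
  define A where "A t = (\<Sum>k=l1..u1. if k \<le> K then f k * t ^ k * (1 - t) ^ (K - k) else 0)" for t :: complex
  define B where "B t = (1 - t) ^ (K - n) * (\<Sum>k=l2..u2. g k * t ^ k)" for t :: complex
  have AB: "A t = B t" if "t \<noteq> 1" for t
  proof -
    have nz: "1 - t \<noteq> 0" using that by simp
    have "B t = (\<Sum>k=l1..u1. f k * t ^ k * (1 - t) powi (int n - int k) * (1 - t) ^ (K - n))"
      unfolding B_def poly_id[rule_format, symmetric] by (simp add: sum_distrib_left mult_ac)
    also have "\<dots> = A t" unfolding A_def
    proof (rule sum.cong[OF refl])
      fix k assume k: "k \<in> {l1..u1}"
      show "f k * t ^ k * (1 - t) powi (int n - int k) * (1 - t) ^ (K - n) =
            (if k \<le> K then f k * t ^ k * (1 - t) ^ (K - k) else 0)"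
      proof (cases "k \<le> K")
        case True
        have "(1 - t) powi (int n - int k) * (1 - t) ^ (K - n) = (1 - t) powi (int n - int k) * (1 - t) powi int (K - n)"
          by (simp add: power_int_of_nat)
        also have "\<dots> = (1 - t) powi (int n - int k + int (K - n))"
          using nz by (simp add: power_int_add)
        also have "int n - int k + int (K - n) = int (K - k)" using True nK by simp
        also have "(1 - t) powi int (K - k) = (1 - t) ^ (K - k)" by (simp add: power_int_of_nat)
        finally show ?thesis using True by (simp add: mult.assoc)
      next
        case False then show ?thesis using big[OF k] by simp
      qed
    qed
    finally show ?thesis by simp
  qed
  have cA: "isCont A 1" unfolding A_def
  proof (intro continuous_intros)
    fix k show "isCont (\<lambda>x::complex. if k \<le> K then f k * x ^ k * (1 - x) ^ (K - k) else 0) 1"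
      by (cases "k \<le> K") (simp_all add: continuous_intros)
  qed
  have cB: "isCont B 1" unfolding B_def by (intro continuous_intros)
  have "(A \<longlongrightarrow> B 1) (at 1)"
  proof -
    have "(B \<longlongrightarrow> B 1) (at 1)" using cB by (simp add: isCont_def)
    moreover have "eventually (\<lambda>t. B t = A t) (at 1)"
      using AB by (auto simp: eventually_at_filter)
    ultimately show ?thesis by (rule Lim_transform_eventually)
  qed
  moreover have "(A \<longlongrightarrow> A 1) (at 1)" using cA by (simp add: isCont_def)
  ultimately have "A 1 = B 1" using LIM_unique by blast
  moreover have "B 1 = 0" unfolding B_def using nK by simp
  moreover have "A 1 = f K"
  proof -
    have "A 1 = (\<Sum>k\<in>{l1..u1}. if k = K then f K else 0)" unfolding A_def
      by (intro sum.cong) auto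
    also have "\<dots> = f K" using KS unfolding S_def by simp
    finally show ?thesis .
  qed
  ultimately show False using KS unfolding S_def by simp
qed



definition acoef :: "nat \<Rightarrow> nat \<Rightarrow> nat \<Rightarrow> complex" where
  "acoef n k i = (if k \<le> i then of_nat ((n - k) choose (i - k)) * (-1) ^ (i - k) else 0)"

lemma acoef_sum:
  assumes "k \<le> n" "n \<le> N"
  shows "(\<Sum>i\<le>N. acoef n k i * \<psi> i) = (\<Sum>j\<le>n-k. of_nat ((n-k) choose j) * (-1)^j * \<psi> (k+j))"
proof -
  have "(\<Sum>i\<le>N. acoef n k i * \<psi> i) = (\<Sum>i\<in>{k..N}. of_nat ((n - k) choose (i - k)) * (-1) ^ (i - k) * \<psi> i)"
    unfolding acoef_def by (rule sum.mono_neutral_cong_right) auto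
  also have "\<dots> = (\<Sum>j\<in>{0..N-k}. of_nat ((n - k) choose j) * (-1) ^ j * \<psi> (k+j))"
  proof -
    have "N - k + k = N" using assms by simp
    then show ?thesis
      using sum.shift_bounds_cl_nat_ivl[of "\<lambda>i. of_nat ((n - k) choose (i - k)) * (-1) ^ (i - k) * \<psi> i" 0 k "N-k"]
      by (simp add: add.commute)
  qed
  also have "\<dots> = (\<Sum>j\<le>n-k. of_nat ((n-k) choose j) * (-1)^j * \<psi> (k+j))"
    using assms by (intro sum.mono_neutral_cong_right) auto
  finally show ?thesis .
qed

lemma binom_expand:
  "(t::complex) ^ k * (1 - t) ^ m = (\<Sum>j\<le>m. of_nat (m choose j) * (-1)^j * t ^ (k+j))"
proof -
  have "(1 - t) ^ m = (-t + 1) ^ m" by simp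
  also have "\<dots> = (\<Sum>j\<le>m. of_nat (m choose j) * (-t) ^ j * 1 ^ (m - j))"
    by (rule binomial_ring)
  also have "\<dots> = (\<Sum>j\<le>m. of_nat (m choose j) * (-1)^j * t ^ j)"
    by (intro sum.cong refl) (simp only: power_minus[of t] power_one mult_1_right mult.assoc)
  finally have "(1 - t) ^ m = (\<Sum>j\<le>m. of_nat (m choose j) * (-1)^j * t ^ j)" .
  then have "t ^ k * (1 - t) ^ m = (\<Sum>j\<le>m. t ^ k * (of_nat (m choose j) * (-1)^j * t ^ j))"
    by (simp add: sum_distrib_left)
  also have "\<dots> = (\<Sum>j\<le>m. of_nat (m choose j) * (-1)^j * t ^ (k+j))"
    by (simp add: power_add mult_ac)
  finally show ?thesis .
qed

lemma transfer:
  fixes f g :: "nat \<Rightarrow> complex" and \<phi> :: "nat \<Rightarrow> complex"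
  assumes poly_id: "\<forall>t::complex.
      (\<Sum>k=l1..u1. f k * t ^ k * (1 - t) powi (int n - int k)) = (\<Sum>k=l2..u2. g k * t ^ k)"
    and fz: "\<forall>k\<in>{l1..u1}. n < k \<longrightarrow> f k = 0"
  shows "(\<Sum>k=l1..u1. f k * (\<Sum>j\<le>n-k. of_nat ((n-k) choose j) * (-1)^j * \<phi> (k+j)))
       = (\<Sum>k=l2..u2. g k * \<phi> k)"
proof -
  define N where "N = n + u2"
  define c where "c i = (\<Sum>k=l1..u1. f k * acoef n k i)" for i
  define g' where "g' i = (if i \<in> {l2..u2} then g i else 0)" for i
  have gen: "(\<Sum>k=l1..u1. f k * (\<Sum>j\<le>n-k. of_nat ((n-k) choose j) * (-1)^j * \<psi> (k+j)))
       = (\<Sum>i\<le>N. c i * \<psi> i)" for \<psi> :: "nat \<Rightarrow> complex"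
  proof -
    have "(\<Sum>k=l1..u1. f k * (\<Sum>j\<le>n-k. of_nat ((n-k) choose j) * (-1)^j * \<psi> (k+j)))
        = (\<Sum>k=l1..u1. f k * (\<Sum>i\<le>N. acoef n k i * \<psi> i))"
    proof (rule sum.cong[OF refl])
      fix k assume k: "k \<in> {l1..u1}"
      show "f k * (\<Sum>j\<le>n-k. of_nat ((n-k) choose j) * (-1)^j * \<psi> (k+j)) = f k * (\<Sum>i\<le>N. acoef n k i * \<psi> i)"
      proof (cases "k \<le> n")
        case True then show ?thesis using acoef_sum[OF True, of N \<psi>] by (simp add: N_def)
      next
        case False then show ?thesis using fz k by simp
      qed
    qed
    also have "\<dots> = (\<Sum>i\<le>N. c i * \<psi> i)"
      unfolding c_def
    proof -
      have "(\<Sum>k=l1..u1. f k * (\<Sum>i\<le>N. acoef n k i * \<psi> i)) = (\<Sum>k=l1..u1. \<Sum>i\<le>N. f k * acoef n k i * \<psi> i)"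
        by (simp only: sum_distrib_left mult.assoc)
      also have "\<dots> = (\<Sum>i\<le>N. \<Sum>k=l1..u1. f k * acoef n k i * \<psi> i)" by (rule sum.swap)
      also have "\<dots> = (\<Sum>i\<le>N. (\<Sum>k=l1..u1. f k * acoef n k i) * \<psi> i)"
        by (simp only: sum_distrib_right)
      finally show "(\<Sum>k=l1..u1. f k * (\<Sum>i\<le>N. acoef n k i * \<psi> i)) = (\<Sum>i\<le>N. (\<Sum>k=l1..u1. f k * acoef n k i) * \<psi> i)" .
    qed
    finally show ?thesis .
  qed
  have gen2: "(\<Sum>k=l2..u2. g k * \<psi> k) = (\<Sum>i\<le>N. g' i * \<psi> i)" for \<psi> :: "nat \<Rightarrow> complex"
    unfolding g'_def N_def by (rule sum.mono_neutral_cong_left) auto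
  have "\<forall>t::complex. (\<Sum>i\<le>N. c i * t ^ i) = (\<Sum>i\<le>N. g' i * t ^ i)"
  proof
    fix t :: complex
    have "(\<Sum>i\<le>N. c i * t ^ i) = (\<Sum>k=l1..u1. f k * (\<Sum>j\<le>n-k. of_nat ((n-k) choose j) * (-1)^j * t ^ (k+j)))"
      using gen[of "\<lambda>i. t ^ i"] by simp
    also have "\<dots> = (\<Sum>k=l1..u1. f k * t ^ k * (1 - t) powi (int n - int k))"
    proof (rule sum.cong[OF refl])
      fix k assume k: "k \<in> {l1..u1}"
      show "f k * (\<Sum>j\<le>n-k. of_nat ((n-k) choose j) * (-1)^j * t ^ (k+j)) = f k * t ^ k * (1 - t) powi (int n - int k)"
      proof (cases "k \<le> n")
        case True
        then have "int n - int k = int (n - k)" by simp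
        then have pw: "(1 - t) powi (int n - int k) = (1 - t) ^ (n - k)" by (simp only: power_int_of_nat)
        show ?thesis unfolding mult.assoc pw binom_expand[of t k "n-k"] ..
      next
        case False then show ?thesis using fz k by simp
      qed
    qed
    also have "\<dots> = (\<Sum>k=l2..u2. g k * t ^ k)" using poly_id by simp
    also have "\<dots> = (\<Sum>i\<le>N. g' i * t ^ i)" by (rule gen2)
    finally show "(\<Sum>i\<le>N. c i * t ^ i) = (\<Sum>i\<le>N. g' i * t ^ i)" .
  qed
  then have ceq: "\<forall>i\<le>N. c i = g' i" by (simp only: polyfun_eq_coeffs)
  have "(\<Sum>i\<le>N. c i * \<phi> i) = (\<Sum>i\<le>N. g' i * \<phi> i)" using ceq by simp
  then show ?thesis using gen[of \<phi>] gen2[of \<phi>] by simp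
qed


lemma cb:
  assumes "k \<le> n" "s \<notin> \<int>\<^sub>\<le>\<^sub>0"
  shows "1 / ((of_nat k + s) * cbinom (of_nat n + s) (of_nat k + s)) = Pm (n - k) (of_nat k + s)"
proof -
  define x where "x = of_nat k + s"
  define m where "m = n - k"
  have x: "x \<notin> \<int>\<^sub>\<le>\<^sub>0" unfolding x_def using nonpos_shift[OF assms(2), of k] by (simp add: add.commute)
  have x1: "x + 1 \<notin> \<int>\<^sub>\<le>\<^sub>0" using nonpos_shift[OF x, of 1] by simp
  have x1m: "x + 1 + of_nat m \<notin> \<int>\<^sub>\<le>\<^sub>0" using nonpos_shift[OF x1, of m] by simp
  have ns: "of_nat n + s = x + of_nat m" unfolding x_def m_def using assms(1) by (simp add: of_nat_diff)
  have d: "of_nat n + s - (of_nat k + s) + 1 = 1 + (of_nat m :: complex)" unfolding m_def using assms(1) by (simp add: of_nat_diff)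
  have g1: "Gamma (x + 1) \<noteq> 0" using Gamma_nonzero[OF x1] .
  have G: "Gamma (x + 1 + of_nat m) = Gamma (x + 1) * pochhammer (x + 1) m"
    using pochhammer_rGamma[of "x+1" m] rGamma_nonzero[OF x1m] rGamma_nonzero[OF x1] g1
    by (simp add: rGamma_inverse_Gamma field_simps)
  have "cbinom (of_nat n + s) (of_nat k + s) = pochhammer (x + 1) m / fact m"
    unfolding cbinom_def d Gamma_fact ns[symmetric] using G g1 unfolding x_def ns
    by (simp add: add_ac)
  then have "(of_nat k + s) * cbinom (of_nat n + s) (of_nat k + s) = pochhammer x (Suc m) / fact m"
    unfolding x_def[symmetric] by (simp add: pochhammer_rec)
  then show ?thesis unfolding Pm_def m_def[symmetric] x_def[symmetric] by simp
qed

lemma main_s: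
  fixes f g :: "nat \<Rightarrow> complex" and s :: complex
  assumes poly_id: "\<forall>t::complex.
      (\<Sum>k=l1..u1. f k * t ^ k * (1 - t) powi (int n - int k)) = (\<Sum>k=l2..u2. g k * t ^ k)"
    and s: "s \<notin> \<int>\<^sub>\<le>\<^sub>0"
  shows "(\<Sum>k=l1..u1. f k / ((of_nat k + s) * cbinom (of_nat n + s) (of_nat k + s)))
           = (\<Sum>k=l2..u2. g k / (of_nat k + s))
       \<and> (\<Sum>k=l1..u1. f k * (of_real (harm (n - k)) - Hc (of_nat n + s))
                          / ((of_nat k + s) * cbinom (of_nat n + s) (of_nat k + s)))
           = - (\<Sum>k=l2..u2. g k * Hc (of_nat k + s) / (of_nat k + s))"
proof
  have fz: "\<forall>k\<in>{l1..u1}. n < k \<longrightarrow> f k = 0" using fzero[OF poly_id] .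
  have xs: "of_nat k + s \<notin> \<int>\<^sub>\<le>\<^sub>0" for k using nonpos_shift[OF s, of k] by (simp add: add.commute)
  have shift: "of_nat (k + j) + s = of_nat k + s + of_nat j" for k j by simp
  have T1: "(\<Sum>k=l1..u1. f k * Sd (\<lambda>y. 1 / y) (n - k) (of_nat k + s)) = (\<Sum>k=l2..u2. g k / (of_nat k + s))"
    using transfer[OF poly_id fz, of "\<lambda>i. 1 / (of_nat i + s)"] unfolding Sd_def shift by simp
  show "(\<Sum>k=l1..u1. f k / ((of_nat k + s) * cbinom (of_nat n + s) (of_nat k + s)))
           = (\<Sum>k=l2..u2. g k / (of_nat k + s))"
    unfolding T1[symmetric]
  proof (rule sum.cong[OF refl])
    fix k assume k: "k \<in> {l1..u1}"
    show "f k / ((of_nat k + s) * cbinom (of_nat n + s) (of_nat k + s)) = f k * Sd (\<lambda>y. 1 / y) (n - k) (of_nat k + s)"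
    proof (cases "k \<le> n")
      case True
      have "f k / ((of_nat k + s) * cbinom (of_nat n + s) (of_nat k + s))
          = f k * (1 / ((of_nat k + s) * cbinom (of_nat n + s) (of_nat k + s)))" by simp
      also have "\<dots> = f k * Sd (\<lambda>y. 1 / y) (n - k) (of_nat k + s)"
        unfolding cb[OF True s] Sd_inv[OF xs[of k], of "n-k"] ..
      finally show ?thesis .
    next
      case False then show ?thesis using fz k by simp
    qed
  qed
  have neg1: "(\<Sum>j\<le>m. of_nat (m choose j) * (-1)^j * (- h j)) = - (\<Sum>j\<le>m. of_nat (m choose j) * (-1)^j * h j)"
    for m and h :: "nat \<Rightarrow> complex" by (simp add: sum_negf[symmetric])
  have neg2: "(\<Sum>k=l2..u2. g k * (- (Hc (of_nat k + s) / (of_nat k + s)))) = - (\<Sum>k=l2..u2. g k * Hc (of_nat k + s) / (of_nat k + s))"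
    by (simp add: sum_negf[symmetric])
  have T2: "(\<Sum>k=l1..u1. f k * (- Sd (\<lambda>y. Hc y / y) (n - k) (of_nat k + s))) = - (\<Sum>k=l2..u2. g k * Hc (of_nat k + s) / (of_nat k + s))"
    using transfer[OF poly_id fz, of "\<lambda>i. - (Hc (of_nat i + s) / (of_nat i + s))"] unfolding Sd_def shift neg1 neg2 .
  show "(\<Sum>k=l1..u1. f k * (of_real (harm (n - k)) - Hc (of_nat n + s))
                          / ((of_nat k + s) * cbinom (of_nat n + s) (of_nat k + s)))
           = - (\<Sum>k=l2..u2. g k * Hc (of_nat k + s) / (of_nat k + s))"
    unfolding T2[symmetric]
  proof (rule sum.cong[OF refl])
    fix k assume k: "k \<in> {l1..u1}"
    show "f k * (of_real (harm (n - k)) - Hc (of_nat n + s)) / ((of_nat k + s) * cbinom (of_nat n + s) (of_nat k + s))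
      = f k * (- Sd (\<lambda>y. Hc y / y) (n - k) (of_nat k + s))"
    proof (cases "k \<le> n")
      case True
      have ns: "of_nat k + s + of_nat (n - k) = of_nat n + s" using True by (simp add: of_nat_diff)
      have "f k * (of_real (harm (n - k)) - Hc (of_nat n + s)) / ((of_nat k + s) * cbinom (of_nat n + s) (of_nat k + s))
         = f k * (of_real (harm (n - k)) - Hc (of_nat n + s)) * (1 / ((of_nat k + s) * cbinom (of_nat n + s) (of_nat k + s)))"
        by simp
      also have "\<dots> = f k * (- Sd (\<lambda>y. Hc y / y) (n - k) (of_nat k + s))"
        unfolding cb[OF True s] Sd_H[OF xs[of k]] ns by (simp add: algebra_simps)
      finally show ?thesis .
    next
      case False then show ?thesis using fz k by simp
    qed
  qed
qed

theorem corollary8: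
  fixes n l1 u1 l2 u2 :: nat and f g :: "nat \<Rightarrow> complex" and s :: complex
  assumes poly_id: "\<forall>t::complex.
      (\<Sum>k=l1..u1. f k * t ^ k * (1 - t) powi (int n - int k)) = (\<Sum>k=l2..u2. g k * t ^ k)"
    and s_notnegint: "s \<notin> \<int>\<^sub>\<le>\<^sub>0 - {0}"
    and s_nz: "s \<noteq> 0"
  shows "(\<Sum>k=l1..u1. f k / ((of_nat k + s) * cbinom (of_nat n + s) (of_nat k + s)))
           = (\<Sum>k=l2..u2. g k / (of_nat k + s))
       \<and> (\<Sum>k=l1..u1. f k / ((of_nat k + 1) * cbinom (of_nat n + 1) (of_nat k + 1)))
           = (\<Sum>k=l2..u2. g k / (of_nat k + 1))
       \<and> (\<Sum>k=l1..u1. f k * (of_real (harm (n - k)) - Hc (of_nat n + s))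
                          / ((of_nat k + s) * cbinom (of_nat n + s) (of_nat k + s)))
           = - (\<Sum>k=l2..u2. g k * Hc (of_nat k + s) / (of_nat k + s))
       \<and> (\<Sum>k=l1..u1. f k * (of_real (harm (n - k)) - Hc (of_nat n + 1))
                          / ((of_nat k + 1) * cbinom (of_nat n + 1) (of_nat k + 1)))
           = - (\<Sum>k=l2..u2. g k * Hc (of_nat k + 1) / (of_nat k + 1))"
proof -
  have s: "s \<notin> \<int>\<^sub>\<le>\<^sub>0" using s_notnegint s_nz by auto
  have one: "(1::complex) \<notin> \<int>\<^sub>\<le>\<^sub>0" by simp
  note A = main_s[OF poly_id s] and B = main_s[OF poly_id one]
  show ?thesis
    by (intro conjI) (rule A[THEN conjunct1], rule B[THEN conjunct1], rule A[THEN conjunct2], rule B[THEN conjunct2])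
qed

end
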